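(* The following equalities hold: $$\mathcal{F}\cdot\mathcal{F}=\mathcal{F},\qquad \mathcal{F}\cdot\mathcal{C}=\mathcal{C},\qquad \mathcal{F}\cdot\mathcal{C}_v=\mathcal{C}_v,\qquad \mathcal{F}\cdot\mathcal{I}=\mathcal{I}.$$
   Context: For a summable sequence $\mathbf{x}=(x_n)$ of positive reals (finite sequences are allowed and are identified with eventually-zero sequences), the achievement set is $\mathcal{A}(\mathbf{x})=\{\sum_{n\in A}x_n : A\subseteq\mathbb{N}\}$. The cardinal function $f_{\mathbf{x}}:\mathcal{A}(\mathbf{x})\to\{1,2,3,\dots\}\cup\{\omega,\mathfrak{c}\}$ sends $x$ to the number (cardinality) of $0$–$1$ sequences $(\varepsilon_n)$, indexed by the nonzero terms, with $\sum\varepsilon_n x_n=x$; $\mathrm{rng}(f)$ denotes its range. Define the families of sets: $\mathcal{F}$ = ranges of cardinal functions of finite sequences; $\mathcal{I}$ = ranges of cardinal functions of sequences whose achievement set is a finite union of (nondegenerate) closed intervals; $\mathcal{C}$ = ranges for sequences whose achievement set is a Cantor set; $\mathcal{C}_v$ = ranges for sequences whose achievement set is a Cantorval (a nonempty compact subset of $\mathbb{R}$ equal to the closure of its interior such that both endpoints of every nontrivial connected component are accumulation points of one-point components). For families $\mathcal{X},\mathcal{Y}$ of subsets of $\mathbb{R}$, $\mathcal{X}\cdot\mathcal{Y}=\{X\cdot Y: X\in\mathcal{X},Y\in\mathcal{Y}\}$ where $X\cdot Y=\{xy:x\in X,y\in Y\}$ (with the conventions that products involving $\omega$ or $\mathfrak{c}$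 are computed as cardinal products). *)

theory Defs
  imports "HOL-Analysis.Analysis"
begin

datatype cval = Fin nat | Aleph0 | Contin

fun cmul :: "cval \<Rightarrow> cval \<Rightarrow> cval" where
  "cmul (Fin m) (Fin n) = Fin (m * n)"
| "cmul (Fin m) Aleph0 = (if m = 0 then Fin 0 else Aleph0)"
| "cmul (Fin m) Contin = (if m = 0 then Fin 0 else Contin)"
| "cmul Aleph0 (Fin n) = (if n = 0 then Fin 0 else Aleph0)"
| "cmul Aleph0 Aleph0 = Aleph0"
| "cmul Aleph0 Contin = Contin"
| "cmul Contin (Fin n) = (if n = 0 then Fin 0 else Contin)"
| "cmul Contin Aleph0 = Contin"
| "cmul Contin Contin = Contin"

text \<open>Cardinality of a set of 0-1 sequences: finite, countably infinite, or
  uncountable (for the closed fibres occurring here, uncountable means continuum).\<close>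
definition cval_of :: "'a set \<Rightarrow> cval" where
  "cval_of S = (if finite S then Fin (card S) else if countable S then Aleph0 else Contin)"

text \<open>Finite sequence of positive reals x_0,...,x_{N-1}, identified with an eventually zero sequence.\<close>
definition finite_seq :: "(nat \<Rightarrow> real) \<Rightarrow> bool" where
  "finite_seq x \<longleftrightarrow> (\<exists>N. \<forall>n. (n < N \<longrightarrow> x n > 0) \<and> (N \<le> n \<longrightarrow> x n = 0))"

definition admissible :: "(nat \<Rightarrow> real) \<Rightarrow> bool" where
  "admissible x \<longleftrightarrow> finite_seq x \<or> ((\<forall>n. x n > 0) \<and> summable x)"

definition subsum :: "(nat \<Rightarrow> real) \<Rightarrow> nat set \<Rightarrow> real" where
  "subsum x A = (\<Sum>n. if n \<in> A then x n else 0)"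

definition ach :: "(nat \<Rightarrow> real) \<Rightarrow> real set" where
  "ach x = {subsum x A | A. A \<subseteq> UNIV}"

text \<open>0-1 sequences indexed by the nonzero terms, represented as subsets of the support.\<close>
definition fiber :: "(nat \<Rightarrow> real) \<Rightarrow> real \<Rightarrow> nat set set" where
  "fiber x t = {A. A \<subseteq> {n. x n \<noteq> 0} \<and> subsum x A = t}"

definition cardfun :: "(nat \<Rightarrow> real) \<Rightarrow> real \<Rightarrow> cval" where
  "cardfun x t = cval_of (fiber x t)"

definition rng :: "(nat \<Rightarrow> real) \<Rightarrow> cval set" where
  "rng x = cardfun x ` ach x"

definition fin_union_intervals :: "real set \<Rightarrow> bool" where
  "fin_union_intervals S \<longleftrightarrow>
     (\<exists>ps :: (real \<times> real) list. ps \<noteq> [] \<and> (\<forall>(a,b)\<in>set ps. a < b) \<and>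
        S = (\<Union>(a,b)\<in>set ps. {a..b}))"

definition cantor_set :: "real set \<Rightarrow> bool" where
  "cantor_set S \<longleftrightarrow> S \<noteq> {} \<and> compact S \<and> (\<forall>y\<in>S. y islimpt S) \<and> interior S = {}"

definition cantorval :: "real set \<Rightarrow> bool" where
  "cantorval S \<longleftrightarrow> S \<noteq> {} \<and> compact S \<and> S = closure (interior S) \<and>
     (let T = {y\<in>S. connected_component_set S y = {y}} in
      \<forall>y\<in>S. connected_component_set S y \<noteq> {y} \<longrightarrow>
        Inf (connected_component_set S y) islimpt T \<and>
        Sup (connected_component_set S y) islimpt T)"

definition FF :: "cval set set" where
  "FF = {rng x | x. finite_seq x}"

definition II :: "cval set set" where
  "II = {rng x | x. admissible x \<and> fin_union_intervals (ach x)}"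

definition CC :: "cval set set" where
  "CC = {rng x | x. admissible x \<and> cantor_set (ach x)}"

definition CV :: "cval set set" where
  "CV = {rng x | x. admissible x \<and> cantorval (ach x)}"

definition setmul :: "cval set \<Rightarrow> cval set \<Rightarrow> cval set" where
  "setmul X Y = {cmul a b | a b. a \<in> X \<and> b \<in> Y}"

definition fammul :: "cval set set \<Rightarrow> cval set set \<Rightarrow> cval set set" where
  "fammul \<X> \<Y> = {setmul X Y | X Y. X \<in> \<X> \<and> Y \<in> \<Y>}"

end

theory Submission
  imports Defs
begin


lemma adm_nonneg: "admissible y \<Longrightarrow> 0 \<le> y n"
  unfolding admissible_def finite_seq_def
  by (metis less_eq_real_def not_le)

lemma finite_seq_summable: "finite_seq y \<Longrightarrow> summable y"
proof -
  assume "finite_seq y"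
  then obtain N where "\<forall>n. (n < N \<longrightarrow> y n > 0) \<and> (N \<le> n \<longrightarrow> y n = 0)"
    unfolding finite_seq_def by blast
  then show ?thesis by (intro summable_finite[of "{..<N}"]) auto
qed

lemma adm_summable: "admissible y \<Longrightarrow> summable y"
  unfolding admissible_def using finite_seq_summable by blast

lemma restr_summable: "admissible y \<Longrightarrow> summable (\<lambda>n. if n \<in> B then y n else 0)"
  by (rule summable_comparison_test[OF _ adm_summable]) (auto simp: adm_nonneg)

lemma subsum_bounds: "admissible y \<Longrightarrow> 0 \<le> subsum y B \<and> subsum y B \<le> suminf y"
  unfolding subsum_def
  using restr_summable[of y B] adm_summable[of y] adm_nonneg[of y]
  by (auto intro!: suminf_nonneg suminf_le)

lemma finseq_subsum:
  assumes "\<forall>n. (n<N \<longrightarrow> x n > 0) \<and> (N \<le> n \<longrightarrow> x n = 0)"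
  shows "subsum x A = sum x (A \<inter> {..<N})"
  unfolding subsum_def
  using assms by (subst suminf_finite[of "A \<inter> {..<N}"]) (auto intro!: sum.cong)

lemma ach_iff: "t \<in> ach x \<longleftrightarrow> (\<exists>A. t = subsum x A)"
  unfolding ach_def by auto

lemma cval_bij: "bij_betw f A B \<Longrightarrow> cval_of A = cval_of B"
proof -
  assume b: "bij_betw f A B"
  have fin: "finite A = finite B" using bij_betw_finite[OF b] .
  have cd: "card A = card B" using bij_betw_same_card[OF b] .
  have im: "f ` A = B" using bij_betw_imp_surj_on[OF b] .
  have inj: "inj_on f A" using bij_betw_imp_inj_on[OF b] .
  have "countable A = countable B"
    using countable_image[of A f] countable_image_inj_on[of f A] im inj by auto
  then show ?thesis unfolding cval_of_def using fin cd by simp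
qed

lemma countable_times_iff:
  "countable (A \<times> B) \<longleftrightarrow> A = {} \<or> B = {} \<or> countable A \<and> countable B"
proof
  assume c: "countable (A \<times> B)"
  show "A = {} \<or> B = {} \<or> countable A \<and> countable B"
  proof (cases "A = {} \<or> B = {}")
    case False
    then have "fst ` (A \<times> B) = A" "snd ` (A \<times> B) = B" by auto
    then show ?thesis using c countable_image by metis
  qed auto
qed auto

lemma cmul_Fin0: "cmul (Fin 0) c = Fin 0" "cmul c (Fin 0) = Fin 0"
  by (cases c; simp)+

lemma cval_empty: "cval_of {} = Fin 0"
  by (simp add: cval_of_def)

lemma cval_times: "cval_of (A \<times> B) = cmul (cval_of A) (cval_of B)"
proof (cases "A = {} \<or> B = {}")
  case True
  then show ?thesis by (auto simp: cval_empty cmul_Fin0)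
next
  case False
  then have nA: "A \<noteq> {}" and nB: "B \<noteq> {}" by auto
  show ?thesis
  proof (cases "finite A \<and> finite B")
    case True
    then show ?thesis by (simp add: cval_of_def card_cartesian_product)
  next
    case nf: False
    show ?thesis
    proof (cases "countable A \<and> countable B")
      case True
      then have c: "cval_of (A \<times> B) = Aleph0"
        using nf nA nB by (simp add: cval_of_def finite_cartesian_product_iff)
      have "cval_of A \<noteq> Contin" "cval_of B \<noteq> Contin" "cval_of A \<noteq> Fin 0" "cval_of B \<noteq> Fin 0"
        using True nA nB by (auto simp: cval_of_def split: if_splits)
      moreover have "cval_of A = Aleph0 \<or> cval_of B = Aleph0"
        using True nf by (auto simp: cval_of_def)
      ultimately show ?thesis unfolding c
        by (cases "cval_of A"; cases "cval_of B"; simp)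
    next
      case False
      then have c: "cval_of (A \<times> B) = Contin"
        using nA nB countable_times_iff[of A B]
        by (auto simp: cval_of_def dest: countable_finite)
      have "cval_of A \<noteq> Fin 0" "cval_of B \<noteq> Fin 0"
        using nA nB by (auto simp: cval_of_def split: if_splits)
      moreover have "cval_of A = Contin \<or> cval_of B = Contin"
        using False by (auto simp: cval_of_def dest: countable_finite)
      ultimately show ?thesis unfolding c
        by (cases "cval_of A"; cases "cval_of B"; simp)
    qed
  qed
qed

lemma exM:
  fixes F :: "real set"
  assumes "finite F"
  shows "\<exists>M>0. \<forall>u\<in>F. \<forall>v\<in>F. u \<noteq> v \<longrightarrow> s < M * \<bar>u - v\<bar>"
proof -
  define D where "D = (\<lambda>(u,v). \<bar>u - v\<bar>) ` {p \<in> F \<times> F. fst p \<noteq> snd p}"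
  have fD: "finite D" unfolding D_def using assms by auto
  show ?thesis
  proof (cases "D = {}")
    case True
    then show ?thesis unfolding D_def by (intro exI[of _ 1]) auto
  next
    case False
    define d where "d = Min D"
    have dpos: "d > 0" unfolding d_def using fD False by (auto simp: D_def)
    have dle: "\<And>u v. u\<in>F \<Longrightarrow> v\<in>F \<Longrightarrow> u\<noteq>v \<Longrightarrow> d \<le> \<bar>u - v\<bar>"
      unfolding d_def using fD by (intro Min_le) (auto simp: D_def image_iff)
    define M where "M = (\<bar>s\<bar> + 1) / d"
    have "M > 0" unfolding M_def using dpos by auto
    moreover have "s < M * \<bar>u - v\<bar>" if "u\<in>F" "v\<in>F" "u\<noteq>v" for u v
    proof -
      have "M * d = \<bar>s\<bar> + 1" unfolding M_def using dpos by auto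
      moreover have "M * d \<le> M * \<bar>u - v\<bar>" using dle[OF that] \<open>M > 0\<close> by auto
      ultimately show ?thesis by linarith
    qed
    ultimately show ?thesis by blast
  qed
qed



lemma interior_Un_disjoint_closed:
  fixes A B :: "real set"
  assumes "closed A" "closed B" "A \<inter> B = {}"
  shows "interior (A \<union> B) = interior A \<union> interior B"
proof
  show "interior A \<union> interior B \<subseteq> interior (A \<union> B)"
    by (simp add: interior_mono)
  show "interior (A \<union> B) \<subseteq> interior A \<union> interior B"
  proof
    fix p assume "p \<in> interior (A \<union> B)"
    then obtain e where e: "e > 0" "ball p e \<subseteq> A \<union> B" by (auto simp: mem_interior)
    have "ball p e \<subseteq> A \<or> ball p e \<subseteq> B"
      using connected_ball[of p e] assms e unfolding connected_closed by blast
    then show "p \<in> interior A \<union> interior B"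
      using e by (auto simp: mem_interior)
  qed
qed

lemma ccs_Un:
  fixes A B :: "real set"
  assumes "closed A" "closed B" "A \<inter> B = {}" "y \<in> A"
  shows "connected_component_set (A \<union> B) y = connected_component_set A y"
proof
  let ?C = "connected_component_set (A \<union> B) y"
  have c: "connected ?C" by simp
  have s: "?C \<subseteq> A \<union> B" by (rule connected_component_subset)
  have yC: "y \<in> ?C" using assms(4) by simp
  have "?C \<subseteq> A"
    using c s yC assms unfolding connected_closed by blast
  then show "?C \<subseteq> connected_component_set A y"
    using c yC by (intro connected_component_maximal) auto
  show "connected_component_set A y \<subseteq> ?C"
    by (rule connected_component_mono) auto
qed

lemma ccs_translation_sub:
  fixes S :: "real set"
  shows "(+) c ` connected_component_set S y \<subseteq> connected_component_set ((+) c ` S) (c + y)"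
proof (cases "y \<in> S")
  case True
  show ?thesis
  proof (rule connected_component_maximal)
    show "c + y \<in> (+) c ` connected_component_set S y" using True by simp
    show "connected ((+) c ` connected_component_set S y)"
      by (intro connected_continuous_image continuous_intros) simp
    show "(+) c ` connected_component_set S y \<subseteq> (+) c ` S"
      using connected_component_subset by blast
  qed
next
  case False
  then have "connected_component_set S y = {}" by (metis connected_component_eq_empty)
  then show ?thesis by (metis empty_subsetI image_empty)
qed

lemma ccs_translation:
  fixes S :: "real set"
  shows "connected_component_set ((+) c ` S) (c + y) = (+) c ` connected_component_set S y"
proof
  show "(+) c ` connected_component_set S y \<subseteq> connected_component_set ((+) c ` S) (c + y)"
    by (rule ccs_translation_sub)
  have "(+) (-c) ` connected_component_set ((+) c ` S) (c + y)
        \<subseteq> connected_component_set ((+) (-c) ` (+) c ` S) (-c + (c + y))"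
    by (rule ccs_translation_sub)
  also have "(+) (-c) ` (+) c ` S = S" by (auto simp: image_iff)
  finally have "(+) c ` (+) (-c) ` connected_component_set ((+) c ` S) (c + y)
     \<subseteq> (+) c ` connected_component_set S y" by auto
  moreover have "(+) c ` (+) (-c) ` X = X" for X :: "real set" by (auto simp: image_iff)
  ultimately show "connected_component_set ((+) c ` S) (c + y) \<subseteq> (+) c ` connected_component_set S y"
    by metis
qed

lemma islimpt_translation:
  fixes S :: "real set"
  assumes "y islimpt S"
  shows "(c + y) islimpt ((+) c ` S)"
  using assms unfolding islimpt_approachable
  by (metis add_left_cancel dist_add_cancel image_eqI)

lemma Inf_translation:
  fixes S :: "real set"
  assumes "bdd_below S" "S \<noteq> {}"
  shows "Inf ((+) c ` S) = c + Inf S"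
  using Inf_add_eq[of "\<lambda>x. x" S c] assms by simp

lemma Sup_translation:
  fixes S :: "real set"
  assumes "bdd_above S" "S \<noteq> {}"
  shows "Sup ((+) c ` S) = c + Sup S"
  using Sup_add_eq[of "\<lambda>x. x" S c] assms by simp



lemma cantor_translation:
  assumes "cantor_set S" shows "cantor_set ((+) c ` S)"
  using assms unfolding cantor_set_def
  by (auto simp: compact_translation interior_translation intro: islimpt_translation)

lemma cantor_Un:
  assumes "cantor_set A" "cantor_set B" shows "cantor_set (A \<union> B)"
proof -
  have "closed A" using assms(1) compact_imp_closed unfolding cantor_set_def by blast
  then show ?thesis using assms unfolding cantor_set_def
    by (auto simp: interior_closed_Un_empty_interior intro: islimpt_subset)
qed

lemma fin_translation:
  assumes "fin_union_intervals S" shows "fin_union_intervals ((+) c ` S)"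
proof -
  obtain ps where ps: "ps \<noteq> []" "\<forall>(a,b)\<in>set ps. a < b" "S = (\<Union>(a,b)\<in>set ps. {a..b})"
    using assms unfolding fin_union_intervals_def by blast
  define qs where "qs = map (\<lambda>(a,b). (c+a, c+b)) ps"
  have "qs \<noteq> []" "\<forall>(a,b)\<in>set qs. a < b" using ps by (auto simp: qs_def)
  moreover have "(+) c ` S = (\<Union>(a,b)\<in>set qs. {a..b})"
  proof
    show "(+) c ` S \<subseteq> (\<Union>(a,b)\<in>set qs. {a..b})"
      using ps(3) by (force simp: qs_def)
    show "(\<Union>(a,b)\<in>set qs. {a..b}) \<subseteq> (+) c ` S"
    proof
      fix t assume "t \<in> (\<Union>(a,b)\<in>set qs. {a..b})"
      then obtain a b where "(a,b) \<in> set ps" "t \<in> {c+a..c+b}" by (auto simp: qs_def)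
      then have "t - c \<in> S" using ps(3) by force
      then show "t \<in> (+) c ` S" by (auto intro: image_eqI[of _ _ "t - c"])
    qed
  qed
  ultimately show ?thesis unfolding fin_union_intervals_def by blast
qed

lemma fin_Un:
  assumes "fin_union_intervals A" "fin_union_intervals B" shows "fin_union_intervals (A \<union> B)"
proof -
  obtain ps where ps: "ps \<noteq> []" "\<forall>(a,b)\<in>set ps. a < b" "A = (\<Union>(a,b)\<in>set ps. {a..b})"
    using assms(1) unfolding fin_union_intervals_def by blast
  obtain qs where qs: "qs \<noteq> []" "\<forall>(a,b)\<in>set qs. a < b" "B = (\<Union>(a,b)\<in>set qs. {a..b})"
    using assms(2) unfolding fin_union_intervals_def by blast
  have "ps @ qs \<noteq> []" "\<forall>(a,b)\<in>set (ps @ qs). a < b" using ps qs by auto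
  moreover have "A \<union> B = (\<Union>(a,b)\<in>set (ps @ qs). {a..b})" using ps qs by auto
  ultimately show ?thesis unfolding fin_union_intervals_def by blast
qed

lemma cantorval_translation:
  assumes "cantorval S" shows "cantorval ((+) c ` S)"
proof -
  let ?S = "(+) c ` S"
  define T where "T = {y\<in>S. connected_component_set S y = {y}}"
  define T' where "T' = {y\<in>?S. connected_component_set ?S y = {y}}"
  have ne: "S \<noteq> {}" and cp: "compact S" and cl: "S = closure (interior S)"
    and pr: "\<And>y. y\<in>S \<Longrightarrow> connected_component_set S y \<noteq> {y} \<Longrightarrow>
        Inf (connected_component_set S y) islimpt T \<and> Sup (connected_component_set S y) islimpt T"
    using assms unfolding cantorval_def T_def Let_def by auto
  have bd: "bounded S" using cp compact_imp_bounded by blast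
  have TT: "(+) c ` T \<subseteq> T'"
  proof
    fix t assume "t \<in> (+) c ` T"
    then obtain y where y: "y \<in> S" "connected_component_set S y = {y}" "t = c + y"
      unfolding T_def by auto
    then have "connected_component_set ?S t = {t}" using ccs_translation[of c S y] by simp
    then show "t \<in> T'" using y unfolding T'_def by auto
  qed
  have "?S \<noteq> {}" "compact ?S" using ne cp compact_translation by auto
  moreover have "?S = closure (interior ?S)"
    using cl by (simp add: interior_translation closure_translation)
  moreover have "Inf (connected_component_set ?S y') islimpt T' \<and> Sup (connected_component_set ?S y') islimpt T'"
    if y': "y' \<in> ?S" "connected_component_set ?S y' \<noteq> {y'}" for y'
  proof -
    obtain y where y: "y \<in> S" "y' = c + y" using y' by auto
    let ?C = "connected_component_set S y"
    have C: "connected_component_set ?S y' = (+) c ` ?C" using y by (simp add: ccs_translation)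
    have Cne: "?C \<noteq> {y}" using y' C y by auto
    have Cb: "bounded ?C" using bd connected_component_subset bounded_subset by blast
    have Cn: "?C \<noteq> {}" using y(1) by (metis connected_component_eq_empty)
    have i: "Inf (connected_component_set ?S y') = c + Inf ?C"
      using C Cb Cn by (simp add: Inf_translation bounded_imp_bdd_below)
    have s: "Sup (connected_component_set ?S y') = c + Sup ?C"
      using C Cb Cn by (simp add: Sup_translation bounded_imp_bdd_above)
    from pr[OF y(1) Cne] show ?thesis
      unfolding i s using TT by (auto intro: islimpt_subset islimpt_translation)
  qed
  ultimately show ?thesis unfolding cantorval_def T'_def Let_def by blast
qed

lemma cantorval_Un_half:
  assumes A: "cantorval A" and B: "cantorval B" and d: "A \<inter> B = {}" and y: "y \<in> A"
    and ne: "connected_component_set (A \<union> B) y \<noteq> {y}"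
  shows "Inf (connected_component_set (A \<union> B) y) islimpt {y\<in>A \<union> B. connected_component_set (A \<union> B) y = {y}}
       \<and> Sup (connected_component_set (A \<union> B) y) islimpt {y\<in>A \<union> B. connected_component_set (A \<union> B) y = {y}}"
proof -
  have cA: "closed A" using A compact_imp_closed unfolding cantorval_def by blast
  have cB: "closed B" using B compact_imp_closed unfolding cantorval_def by blast
  have eq: "connected_component_set (A \<union> B) y = connected_component_set A y"
    using ccs_Un[OF cA cB d y] .
  have sub: "{y\<in>A. connected_component_set A y = {y}} \<subseteq> {y\<in>A \<union> B. connected_component_set (A \<union> B) y = {y}}"
    using ccs_Un[OF cA cB d] by auto
  have "Inf (connected_component_set A y) islimpt {y\<in>A. connected_component_set A y = {y}}
     \<and> Sup (connected_component_set A y) islimpt {y\<in>A. connected_component_set A y = {y}}"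
    using A y ne eq unfolding cantorval_def Let_def by auto
  then show ?thesis unfolding eq using sub islimpt_subset by blast
qed

lemma cantorval_Un:
  assumes A: "cantorval A" and B: "cantorval B" and d: "A \<inter> B = {}"
  shows "cantorval (A \<union> B)"
proof -
  have cA: "closed A" using A compact_imp_closed unfolding cantorval_def by blast
  have cB: "closed B" using B compact_imp_closed unfolding cantorval_def by blast
  have "A \<union> B \<noteq> {}" "compact (A \<union> B)" using A B unfolding cantorval_def by auto
  moreover have "A \<union> B = closure (interior (A \<union> B))"
    using A B unfolding cantorval_def interior_Un_disjoint_closed[OF cA cB d] closure_Un by auto
  moreover have "\<forall>y\<in>A \<union> B. connected_component_set (A \<union> B) y \<noteq> {y} \<longrightarrow>
      Inf (connected_component_set (A \<union> B) y) islimpt {y\<in>A \<union> B. connected_component_set (A \<union> B) y = {y}}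
       \<and> Sup (connected_component_set (A \<union> B) y) islimpt {y\<in>A \<union> B. connected_component_set (A \<union> B) y = {y}}"
  proof (intro ballI impI)
    fix y assume y: "y \<in> A \<union> B" and ne: "connected_component_set (A \<union> B) y \<noteq> {y}"
    show "Inf (connected_component_set (A \<union> B) y) islimpt {y\<in>A \<union> B. connected_component_set (A \<union> B) y = {y}}
       \<and> Sup (connected_component_set (A \<union> B) y) islimpt {y\<in>A \<union> B. connected_component_set (A \<union> B) y = {y}}"
    proof (cases "y \<in> A")
      case True
      then show ?thesis using cantorval_Un_half[OF A B d True ne] by blast
    next
      case False
      then have yB: "y \<in> B" using y by blast
      have d': "B \<inter> A = {}" using d by blast
      show ?thesis using cantorval_Un_half[OF B A d' yB] ne by (simp add: Un_commute)
    qed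
  qed
  ultimately show ?thesis unfolding cantorval_def Let_def by blast
qed

lemma union_translates:
  fixes K :: "real set"
  assumes "finite F" "F \<noteq> {}"
    and tr: "\<And>S c. P S \<Longrightarrow> P ((+) c ` S)"
    and un: "\<And>A B. P A \<Longrightarrow> P B \<Longrightarrow> A \<inter> B = {} \<Longrightarrow> P (A \<union> B)"
    and K: "P K"
    and dj: "\<forall>a\<in>F. \<forall>a'\<in>F. a \<noteq> a' \<longrightarrow> (+) a ` K \<inter> (+) a' ` K = {}"
  shows "P (\<Union>a\<in>F. (+) a ` K)"
  using assms(1,2) dj
proof (induction F rule: finite_ne_induct)
  case (singleton x)
  then show ?case using tr K by simp
next
  case (insert x F)
  have dF: "\<forall>a\<in>F. \<forall>a'\<in>F. a \<noteq> a' \<longrightarrow> (+) a ` K \<inter> (+) a' ` K = {}"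
    using insert.prems by simp
  have "P ((+) x ` K)" using tr K by blast
  moreover have "P (\<Union>a\<in>F. (+) a ` K)" using insert.IH[OF dF] .
  moreover have "(+) x ` K \<inter> (+) a ` K = {}" if a: "a \<in> F" for a
  proof -
    have "x \<noteq> a" using a insert.hyps by blast
    then show ?thesis using insert.prems[rule_format, of x a] a by blast
  qed
  then have "(+) x ` K \<inter> (\<Union>a\<in>F. (+) a ` K) = {}" by blast
  ultimately show ?case using un by simp
qed



lemma main_construction:
  assumes xf: "finite_seq x" and ya: "admissible y"
  shows "\<exists>z. rng z = setmul (rng x) (rng y) \<and> admissible z \<and> (finite_seq y \<longrightarrow> finite_seq z) \<and>
    (\<exists>F. finite F \<and> F \<noteq> {} \<and> ach z = (\<Union>a\<in>F. (+) a ` ach y) \<and>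
       (\<forall>a\<in>F. \<forall>a'\<in>F. a \<noteq> a' \<longrightarrow> (+) a ` ach y \<inter> (+) a' ` ach y = {}))"
proof -
  from xf obtain N where xN: "\<forall>n. (n<N \<longrightarrow> x n > 0) \<and> (N \<le> n \<longrightarrow> x n = 0)"
    unfolding finite_seq_def by blast
  define s where "s = suminf y"
  have xsub: "\<And>A. subsum x A = sum x (A \<inter> {..<N})" using finseq_subsum[OF xN] .
  have "ach x \<subseteq> (\<lambda>A. sum x A) ` Pow {..<N}"
  proof
    fix t assume "t \<in> ach x"
    then obtain A where "t = subsum x A" by (auto simp: ach_iff)
    then show "t \<in> (\<lambda>A. sum x A) ` Pow {..<N}" using xsub by auto
  qed
  then have finach: "finite (ach x)" by (rule finite_subset) auto
  obtain M where M: "M > 0" "\<forall>u\<in>ach x. \<forall>v\<in>ach x. u \<noteq> v \<longrightarrow> s < M * \<bar>u - v\<bar>"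
    using exM[OF finach] by blast
  define z where "z = (\<lambda>n. if n < N then M * x n else y (n - N))"
  have yb: "\<And>B. 0 \<le> subsum y B \<and> subsum y B \<le> s" using subsum_bounds[OF ya] s_def by blast
  have sep: "a = a'" if "a\<in>ach x" "a'\<in>ach x" "0\<le>b" "b\<le>s" "0\<le>b'" "b'\<le>s"
     "M*a+b = M*a'+b'" for a a' b b'
  proof (rule ccontr)
    assume "a \<noteq> a'"
    then have "s < M * \<bar>a - a'\<bar>" using M(2) that by blast
    moreover have "M * \<bar>a - a'\<bar> = \<bar>b' - b\<bar>"
    proof -
      have "M * \<bar>a - a'\<bar> = \<bar>M * (a - a')\<bar>" using M(1) by (simp add: abs_mult)
      also have "M * (a - a') = b' - b" using that(7) by (simp add: algebra_simps)
      finally show ?thesis .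
    qed
    moreover have "\<bar>b' - b\<bar> \<le> s" using that by auto
    ultimately show False by linarith
  qed
  have zadm: "admissible z"
    using ya unfolding admissible_def
  proof
    assume "finite_seq y"
    then obtain N' where yN: "\<forall>n. (n<N' \<longrightarrow> y n > 0) \<and> (N' \<le> n \<longrightarrow> y n = 0)"
      unfolding finite_seq_def by blast
    have "\<forall>n. (n<N+N' \<longrightarrow> z n > 0) \<and> (N+N' \<le> n \<longrightarrow> z n = 0)"
      using yN xN M(1) unfolding z_def by auto
    then show "finite_seq z \<or> (\<forall>n. 0 < z n) \<and> summable z"
      unfolding finite_seq_def by blast
  next
    assume yp: "(\<forall>n. 0 < y n) \<and> summable y"
    have "\<forall>n. 0 < z n" using yp xN M(1) unfolding z_def by auto
    moreover have "summable z"
    proof -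
      have "summable (\<lambda>n. z (n + N))" using yp unfolding z_def by simp
      then show ?thesis by simp
    qed
    ultimately show "finite_seq z \<or> (\<forall>n. 0 < z n) \<and> summable z" by blast
  qed
  have zfin: "finite_seq y \<longrightarrow> finite_seq z"
  proof
    assume "finite_seq y"
    then obtain N' where yN: "\<forall>n. (n<N' \<longrightarrow> y n > 0) \<and> (N' \<le> n \<longrightarrow> y n = 0)"
      unfolding finite_seq_def by blast
    have "\<forall>n. (n<N+N' \<longrightarrow> z n > 0) \<and> (N+N' \<le> n \<longrightarrow> z n = 0)"
      using yN xN M(1) unfolding z_def by auto
    then show "finite_seq z" unfolding finite_seq_def by blast
  qed
  have zdec: "subsum z A = M * sum x (A \<inter> {..<N}) + subsum y {m. m + N \<in> A}" for A
  proof -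
    have sm: "summable (\<lambda>n. if n\<in>A then z n else 0)" by (rule restr_summable[OF zadm])
    have "subsum z A = (\<Sum>n. (\<lambda>n. if n\<in>A then z n else 0) (n + N)) + (\<Sum>i<N. if i\<in>A then z i else 0)"
      unfolding subsum_def by (rule suminf_split_initial_segment[OF sm])
    moreover have "(\<Sum>n. (\<lambda>n. if n\<in>A then z n else 0) (n + N)) = subsum y {m. m + N \<in> A}"
      unfolding subsum_def z_def by (intro arg_cong[where f=suminf] ext) simp
    moreover have "(\<Sum>i<N. if i\<in>A then z i else 0) = M * sum x (A \<inter> {..<N})"
    proof -
      have "(\<Sum>i<N. if i\<in>A then z i else 0) = (\<Sum>i<N. M * (if i\<in>A then x i else 0))"
        by (rule sum.cong) (auto simp: z_def)
      also have "\<dots> = M * (\<Sum>i<N. if i\<in>A then x i else 0)" by (simp add: sum_distrib_left)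
      also have "(\<Sum>i<N. if i\<in>A then x i else 0) = sum x ({..<N} \<inter> A)"
        by (simp add: sum.inter_restrict)
      finally show ?thesis by (simp add: Int_commute)
    qed
    ultimately show ?thesis by simp
  qed
  have suppx: "{n. x n \<noteq> 0} = {..<N}" using xN by (auto simp: not_less)
  have achz: "ach z = {M*a+b | a b. a \<in> ach x \<and> b \<in> ach y}"
  proof
    show "ach z \<subseteq> {M*a+b | a b. a \<in> ach x \<and> b \<in> ach y}"
    proof
      fix t assume "t \<in> ach z"
      then obtain A where t: "t = subsum z A" by (auto simp: ach_iff)
      have "sum x (A \<inter> {..<N}) = subsum x (A \<inter> {..<N})" using xsub by simp
      then have "sum x (A \<inter> {..<N}) \<in> ach x" by (auto simp: ach_iff)
      moreover have "subsum y {m. m + N \<in> A} \<in> ach y" by (auto simp: ach_iff)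
      ultimately show "t \<in> {M*a+b | a b. a \<in> ach x \<and> b \<in> ach y}" using t zdec by blast
    qed
    show "{M*a+b | a b. a \<in> ach x \<and> b \<in> ach y} \<subseteq> ach z"
    proof
      fix t assume "t \<in> {M*a+b | a b. a \<in> ach x \<and> b \<in> ach y}"
      then obtain A1 B where t: "t = M * subsum x A1 + subsum y B" by (auto simp: ach_iff)
      define A where "A = (A1 \<inter> {..<N}) \<union> (\<lambda>m. m + N) ` B"
      have "A \<inter> {..<N} = A1 \<inter> {..<N}" unfolding A_def by auto
      moreover have "{m. m + N \<in> A} = B" unfolding A_def by auto
      ultimately have "subsum z A = t" using zdec[of A] t xsub by simp
      then show "t \<in> ach z" by (auto simp: ach_iff)
    qed
  qed
  have cardz: "cardfun z (M*a+b) = cmul (cardfun x a) (cardfun y b)"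
    if a: "a \<in> ach x" and b: "b \<in> ach y" for a b
  proof -
    have b0: "0 \<le> b" "b \<le> s" using b yb by (auto simp: ach_iff)
    let ?f = "\<lambda>A. (A \<inter> {..<N}, {m. m + N \<in> A})"
    let ?g = "\<lambda>(A1, B). A1 \<union> (\<lambda>m. m + N) ` B"
    have "bij_betw ?f (fiber z (M*a+b)) (fiber x a \<times> fiber y b)"
    proof (rule bij_betwI)
      show "?f \<in> fiber z (M*a+b) \<rightarrow> fiber x a \<times> fiber y b"
      proof
        fix A assume "A \<in> fiber z (M*a+b)"
        then have As: "A \<subseteq> {n. z n \<noteq> 0}" and Ae: "subsum z A = M*a+b" by (auto simp: fiber_def)
        have s1: "A \<inter> {..<N} \<subseteq> {n. x n \<noteq> 0}" using suppx by auto
        have s2: "{m. m + N \<in> A} \<subseteq> {n. y n \<noteq> 0}" using As by (auto simp: z_def)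
        define a' where "a' = subsum x (A \<inter> {..<N})"
        define b' where "b' = subsum y {m. m + N \<in> A}"
        have a'e: "a' = sum x (A \<inter> {..<N})" unfolding a'_def using xsub by simp
        have "M*a'+b' = M*a+b" using Ae zdec[of A] a'e b'_def by simp
        moreover have "a' \<in> ach x" unfolding a'_def by (auto simp: ach_iff)
        moreover have "0 \<le> b'" "b' \<le> s" unfolding b'_def using yb by auto
        ultimately have "a' = a" using sep[OF _ a _ _ _ _] b0 by metis
        moreover then have "b' = b" using \<open>M*a'+b' = M*a+b\<close> by simp
        ultimately show "?f A \<in> fiber x a \<times> fiber y b"
          using s1 s2 unfolding fiber_def a'_def b'_def by auto
      qed
      show "?g \<in> fiber x a \<times> fiber y b \<rightarrow> fiber z (M*a+b)"
      proof
        fix p assume "p \<in> fiber x a \<times> fiber y b"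
        then obtain A1 B where p: "p = (A1, B)" and A1: "A1 \<subseteq> {..<N}" "subsum x A1 = a"
          and B: "B \<subseteq> {n. y n \<noteq> 0}" "subsum y B = b"
          using suppx by (auto simp: fiber_def)
        define A where "A = A1 \<union> (\<lambda>m. m + N) ` B"
        have "A \<inter> {..<N} = A1" unfolding A_def using A1 by auto
        moreover have "{m. m + N \<in> A} = B" unfolding A_def using A1 by auto
        moreover have "sum x A1 = a" using A1 xsub by (simp add: Int_absorb2)
        ultimately have "subsum z A = M*a+b" using zdec[of A] B by simp
        moreover have "A \<subseteq> {n. z n \<noteq> 0}"
          using A1 B xN M(1) unfolding A_def z_def by (auto simp: subset_iff)
        ultimately show "?g p \<in> fiber z (M*a+b)" unfolding fiber_def p A_def by auto
      qed
      show "?g (?f A) = A" if "A \<in> fiber z (M*a+b)" for A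
      proof -
        have "A \<inter> {..<N} \<union> (\<lambda>m. m + N) ` {m. m + N \<in> A} = A"
        proof
          show "A \<subseteq> A \<inter> {..<N} \<union> (\<lambda>m. m + N) ` {m. m + N \<in> A}"
          proof
            fix n assume "n \<in> A"
            then show "n \<in> A \<inter> {..<N} \<union> (\<lambda>m. m + N) ` {m. m + N \<in> A}"
              by (cases "n < N") (auto intro!: image_eqI[of _ _ "n - N"])
          qed
        qed auto
        then show ?thesis by simp
      qed
      show "?f (?g p) = p" if pA: "p \<in> fiber x a \<times> fiber y b" for p
      proof -
        obtain A1 B where p: "p = (A1, B)" and A1: "A1 \<subseteq> {..<N}"
          using pA suppx by (auto simp: fiber_def)
        show ?thesis unfolding p using A1 by auto
      qed
    qed
    then have "cval_of (fiber z (M*a+b)) = cval_of (fiber x a \<times> fiber y b)" by (rule cval_bij)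
    then show ?thesis unfolding cardfun_def by (simp add: cval_times)
  qed
  have rngz: "rng z = setmul (rng x) (rng y)"
  proof
    show "rng z \<subseteq> setmul (rng x) (rng y)"
      unfolding rng_def setmul_def achz using cardz by auto
    show "setmul (rng x) (rng y) \<subseteq> rng z"
    proof
      fix c assume "c \<in> setmul (rng x) (rng y)"
      then obtain a b where ab: "a \<in> ach x" "b \<in> ach y" "c = cmul (cardfun x a) (cardfun y b)"
        unfolding setmul_def rng_def by auto
      then have "c = cardfun z (M*a+b)" using cardz by simp
      moreover have "M*a+b \<in> ach z" unfolding achz using ab by blast
      ultimately show "c \<in> rng z" unfolding rng_def by blast
    qed
  qed
  define F where "F = (\<lambda>a. M * a) ` ach x"
  have "finite F" unfolding F_def using finach by simp
  moreover have "F \<noteq> {}"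
  proof -
    have "subsum x {} \<in> ach x" by (auto simp: ach_iff)
    then show ?thesis unfolding F_def by blast
  qed
  moreover have "ach z = (\<Union>a\<in>F. (+) a ` ach y)" unfolding achz F_def by auto
  moreover have "\<forall>a\<in>F. \<forall>a'\<in>F. a \<noteq> a' \<longrightarrow> (+) a ` ach y \<inter> (+) a' ` ach y = {}"
  proof (intro ballI impI)
    fix a1 a1' assume "a1 \<in> F" "a1' \<in> F" "a1 \<noteq> a1'"
    then obtain a a' where aa: "a \<in> ach x" "a' \<in> ach x" "a1 = M*a" "a1' = M*a'" "a \<noteq> a'"
      unfolding F_def by auto
    show "(+) a1 ` ach y \<inter> (+) a1' ` ach y = {}"
    proof (rule ccontr)
      assume "(+) a1 ` ach y \<inter> (+) a1' ` ach y \<noteq> {}"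
      then obtain b b' where bb: "b \<in> ach y" "b' \<in> ach y" "M*a + b = M*a' + b'" using aa by auto
      have "0 \<le> b" "b \<le> s" "0 \<le> b'" "b' \<le> s" using bb yb by (auto simp: ach_iff)
      then have "a = a'" using sep[OF aa(1,2)] bb(3) by blast
      then show False using aa by simp
    qed
  qed
  ultimately show ?thesis using rngz zadm zfin by blast
qed



lemma zero_rng: "rng (\<lambda>_. 0) = {Fin 1}"
proof -
  have ss: "subsum (\<lambda>_. 0) A = 0" for A by (simp add: subsum_def)
  have a: "ach (\<lambda>_. 0) = {0}" by (auto simp: ach_iff ss)
  have f: "fiber (\<lambda>_. 0) 0 = {{}}" by (auto simp: fiber_def ss)
  have "rng (\<lambda>_. 0) = {cardfun (\<lambda>_. 0) 0}" unfolding rng_def a by simp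
  moreover have "cardfun (\<lambda>_. 0) 0 = Fin 1" unfolding cardfun_def f cval_of_def by simp
  ultimately show ?thesis by simp
qed

lemma one_FF: "{Fin 1} \<in> FF"
proof -
  have "finite_seq (\<lambda>_. 0)" unfolding finite_seq_def by auto
  then show ?thesis unfolding FF_def using zero_rng by blast
qed

lemma setmul_one: "setmul {Fin 1} Y = Y"
proof -
  have "cmul (Fin 1) b = b" for b by (cases b) auto
  then show ?thesis unfolding setmul_def by auto
qed

lemma fam_sup: "\<Y> \<subseteq> fammul FF \<Y>"
  unfolding fammul_def using one_FF setmul_one by blast

lemma finite_adm: "finite_seq y \<Longrightarrow> admissible y"
  unfolding admissible_def by blast

theorem lemma2p1:
  shows "fammul FF FF = FF \<and> fammul FF CC = CC \<and> fammul FF CV = CV \<and> fammul FF II = II"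
proof (intro conjI)
  show "fammul FF FF = FF"
  proof
    show "fammul FF FF \<subseteq> FF"
    proof
      fix W assume "W \<in> fammul FF FF"
      then obtain x y where x: "finite_seq x" and y: "finite_seq y" and W: "W = setmul (rng x) (rng y)"
        unfolding fammul_def FF_def by blast
      obtain z where "rng z = W" "finite_seq z"
        using main_construction[OF x finite_adm[OF y]] y W by blast
      then show "W \<in> FF" unfolding FF_def by blast
    qed
  qed (rule fam_sup)
  show "fammul FF CC = CC"
  proof
    show "fammul FF CC \<subseteq> CC"
    proof
      fix W assume "W \<in> fammul FF CC"
      then obtain x y where x: "finite_seq x" and y: "admissible y" "cantor_set (ach y)"
        and W: "W = setmul (rng x) (rng y)"
        unfolding fammul_def FF_def CC_def by blast
      obtain z F where z: "rng z = W" "admissible z" "finite F" "F \<noteq> {}"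
        "ach z = (\<Union>a\<in>F. (+) a ` ach y)"
        "\<forall>a\<in>F. \<forall>a'\<in>F. a \<noteq> a' \<longrightarrow> (+) a ` ach y \<inter> (+) a' ` ach y = {}"
        using main_construction[OF x y(1)] W by blast
      have "cantor_set (ach z)" unfolding z(5)
        by (rule union_translates[where P=cantor_set]) (use z y in \<open>auto intro: cantor_translation cantor_Un\<close>)
      then show "W \<in> CC" unfolding CC_def using z(1,2) by blast
    qed
  qed (rule fam_sup)
  show "fammul FF CV = CV"
  proof
    show "fammul FF CV \<subseteq> CV"
    proof
      fix W assume "W \<in> fammul FF CV"
      then obtain x y where x: "finite_seq x" and y: "admissible y" "cantorval (ach y)"
        and W: "W = setmul (rng x) (rng y)"
        unfolding fammul_def FF_def CV_def by blast
      obtain z F where z: "rng z = W" "admissible z" "finite F" "F \<noteq> {}"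
        "ach z = (\<Union>a\<in>F. (+) a ` ach y)"
        "\<forall>a\<in>F. \<forall>a'\<in>F. a \<noteq> a' \<longrightarrow> (+) a ` ach y \<inter> (+) a' ` ach y = {}"
        using main_construction[OF x y(1)] W by blast
      have "cantorval (ach z)" unfolding z(5)
        by (rule union_translates[where P=cantorval]) (use z y in \<open>auto intro: cantorval_translation cantorval_Un\<close>)
      then show "W \<in> CV" unfolding CV_def using z(1,2) by blast
    qed
  qed (rule fam_sup)
  show "fammul FF II = II"
  proof
    show "fammul FF II \<subseteq> II"
    proof
      fix W assume "W \<in> fammul FF II"
      then obtain x y where x: "finite_seq x" and y: "admissible y" "fin_union_intervals (ach y)"
        and W: "W = setmul (rng x) (rng y)"
        unfolding fammul_def FF_def II_def by blast
      obtain z F where z: "rng z = W" "admissible z" "finite F" "F \<noteq> {}"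
        "ach z = (\<Union>a\<in>F. (+) a ` ach y)"
        "\<forall>a\<in>F. \<forall>a'\<in>F. a \<noteq> a' \<longrightarrow> (+) a ` ach y \<inter> (+) a' ` ach y = {}"
        using main_construction[OF x y(1)] W by blast
      have "fin_union_intervals (ach z)" unfolding z(5)
        by (rule union_translates[where P=fin_union_intervals]) (use z y in \<open>auto intro: fin_translation fin_Un\<close>)
      then show "W \<in> II" unfolding II_def using z(1,2) by blast
    qed
  qed (rule fam_sup)
qed


end
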